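(* Let $q\in\mathbb N$ (so $q>0$), $0<\sigma<1$, and $K,w_{\min},w_{\max}>0$. Let $(t_i)_{i\in\mathbb Z}$ be a nondecreasing sequence of real knots with $t_i\to\pm\infty$ as $i\to\pm\infty$, with set of distinct nodes $\{\hat z_j:j\in\mathbb Z\}$, $\hat z_{j-1}<\hat z_j$, and let $(w_i)_{i\in\mathbb Z}$ be weights with $w_{\min}\le\inf_{i} w_i\le\sup_i w_i\le w_{\max}$. Suppose the local mesh-ratio is bounded by $K$, i.e. $$\sup_{j\in\mathbb Z}\max\Big(\frac{\hat z_j-\hat z_{j-1}}{\hat z_{j-1}-\hat z_{j-2}},\frac{\hat z_j-\hat z_{j-1}}{\hat z_{j+1}-\hat z_j}\Big)\le K.$$ Then there exists a constant $C_{\rm scale}>0$, depending only on $q,w_{\min},w_{\max}$ and $K$, such that for all $i\in\mathbb Z$ with $|\mathrm{supp}(\hat R_{i,q})|>0$, $$|\mathrm{supp}(\hat R_{i,q})|^{1-2\sigma}\le C_{\rm scale}\,|\hat R_{i,q}|^2_{H^\sigma(\mathrm{supp}(\hat R_{i,q}))}.$$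
   Context: B-splines of degree $r\in\mathbb N_0$ are defined recursively by $\hat B_{i,0}=\chi_{[t_{i-1},t_i)}$ and $\hat B_{i,r}=\beta_{i-1,r}\hat B_{i,r-1}+(1-\beta_{i,r})\hat B_{i+1,r-1}$, where $\beta_{i,r}(t)=(t-t_i)/(t_{i+r}-t_i)$ if $t_i\ne t_{i+r}$ and $\beta_{i,r}=0$ otherwise. The NURBS are $\hat R_{i,q}=w_i\hat B_{i,q}/\sum_{k\in\mathbb Z}w_k\hat B_{k,q}$. For an interval $I$ and $\hat v\in L^2(I)$, the Sobolev–Slobodeckij seminorm is $|\hat v|_{H^\sigma(I)}^2=\int_I\int_I|\hat v(r)-\hat v(s)|^2|r-s|^{-1-2\sigma}\,ds\,dr$. $|\cdot|$ of a set denotes its Lebesgue measure. *)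

theory Defs
  imports "HOL-Analysis.Analysis"
begin

definition bs_beta :: "(int \<Rightarrow> real) \<Rightarrow> int \<Rightarrow> nat \<Rightarrow> real \<Rightarrow> real" where
  "bs_beta t i r x = (if t i \<noteq> t (i + int r) then (x - t i) / (t (i + int r) - t i) else 0)"

fun bspline :: "(int \<Rightarrow> real) \<Rightarrow> int \<Rightarrow> nat \<Rightarrow> real \<Rightarrow> real" where
  "bspline t i 0 x = indicator {t (i - 1)..<t i} x"
| "bspline t i (Suc r) x =
     bs_beta t (i - 1) (Suc r) x * bspline t i r x
     + (1 - bs_beta t i (Suc r) x) * bspline t (i + 1) r x"

definition nurbs :: "(int \<Rightarrow> real) \<Rightarrow> (int \<Rightarrow> real) \<Rightarrow> int \<Rightarrow> nat \<Rightarrow> real \<Rightarrow> real" where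
  "nurbs t w i q x = w i * bspline t i q x / infsum (\<lambda>k. w k * bspline t k q x) UNIV"

definition supp :: "(real \<Rightarrow> real) \<Rightarrow> real set" where
  "supp f = closure {x. f x \<noteq> 0}"

text \<open>Squared Sobolev--Slobodeckij seminorm on I (possibly infinite, hence ennreal).\<close>
definition slobodeckij_sq :: "real \<Rightarrow> real set \<Rightarrow> (real \<Rightarrow> real) \<Rightarrow> ennreal" where
  "slobodeckij_sq \<sigma> I v =
     (\<integral>\<^sup>+ r\<in>I. (\<integral>\<^sup>+ s\<in>I. ennreal (\<bar>v r - v s\<bar>\<^sup>2 * \<bar>r - s\<bar> powr (-1 - 2 * \<sigma>)) \<partial>lborel) \<partial>lborel)"

end

theory Submission
  imports Defs
begin


lemma bs_supp:
  assumes "mono t"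
  shows "bspline t i r x \<noteq> 0 \<Longrightarrow> t (i - 1) \<le> x \<and> x < t (i + int r)"
proof (induction r arbitrary: i)
  case 0
  then show ?case by (auto simp: indicator_def split: if_splits)
next
  case (Suc r)
  have m1: "t (i - 1) \<le> t i" "t (i + int r) \<le> t (i + int (Suc r))"
    using assms by (auto simp: mono_def)
  from Suc.prems have "bspline t i r x \<noteq> 0 \<or> bspline t (i+1) r x \<noteq> 0" by auto
  then show ?case
  proof
    assume "bspline t i r x \<noteq> 0"
    then show ?thesis using Suc.IH[of i] m1 by auto
  next
    assume "bspline t (i+1) r x \<noteq> 0"
    then have "t i \<le> x \<and> x < t (i + 1 + int r)" using Suc.IH[of "i+1"] by auto
    then show ?thesis using m1 by (auto simp: algebra_simps)
  qed
qed

lemma bs_coef1: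
  assumes "mono t" "bspline t i r x \<noteq> 0"
  shows "0 \<le> bs_beta t (i-1) (Suc r) x \<and> bs_beta t (i-1) (Suc r) x \<le> 1"
proof -
  have s: "t (i - 1) \<le> x \<and> x < t (i + int r)" using bs_supp[OF assms] .
  have e: "i - 1 + int (Suc r) = i + int r" by simp
  show ?thesis using s unfolding bs_beta_def e by (auto simp: divide_simps)
qed

lemma bs_coef2:
  assumes "mono t" "bspline t (i+1) r x \<noteq> 0"
  shows "0 \<le> 1 - bs_beta t i (Suc r) x \<and> 1 - bs_beta t i (Suc r) x \<le> 1"
proof -
  have s: "t i \<le> x \<and> x < t (i + 1 + int r)" using bs_supp[OF assms] by simp
  have e: "i + int (Suc r) = i + 1 + int r" by simp
  show ?thesis using s unfolding bs_beta_def e by (auto simp: divide_simps)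
qed

lemma bs_nonneg:
  assumes "mono t"
  shows "0 \<le> bspline t i r x"
proof (induction r arbitrary: i)
  case 0
  then show ?case by simp
next
  case (Suc r)
  have "0 \<le> bs_beta t (i - 1) (Suc r) x * bspline t i r x"
  proof (cases "bspline t i r x = 0")
    case False
    then show ?thesis using bs_coef1[OF assms False] Suc.IH[of i] by simp
  qed simp
  moreover have "0 \<le> (1 - bs_beta t i (Suc r) x) * bspline t (i + 1) r x"
  proof (cases "bspline t (i+1) r x = 0")
    case False
    then show ?thesis using bs_coef2[OF assms False] Suc.IH[of "i+1"] by simp
  qed simp
  ultimately show ?case by simp
qed

lemma bs_pu:
  assumes "mono t" "t (j - 1) \<le> x" "x < t j"
  shows "(\<Sum>k\<in>{j - int r..j}. bspline t k r x) = 1"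
proof (induction r)
  case 0
  then show ?case using assms by simp
next
  case (Suc r)
  define f where "f k = bs_beta t (k - 1) (Suc r) x * bspline t k r x" for k
  define g where "g k = (1 - bs_beta t (k - 1) (Suc r) x) * bspline t k r x" for k
  have z1: "bspline t (j - int r - 1) r x = 0"
  proof (rule ccontr)
    assume "bspline t (j - int r - 1) r x \<noteq> 0"
    from bs_supp[OF assms(1) this] have "x < t (j - 1)" by simp
    then show False using assms by simp
  qed
  have z2: "bspline t (j + 1) r x = 0"
  proof (rule ccontr)
    assume "bspline t (j + 1) r x \<noteq> 0"
    from bs_supp[OF assms(1) this] have "t j \<le> x" by simp
    then show False using assms by simp
  qed
  have "(\<Sum>k\<in>{j - int (Suc r)..j}. bspline t k (Suc r) x)
      = (\<Sum>k\<in>{j - int (Suc r)..j}. f k) + (\<Sum>k\<in>{j - int (Suc r)..j}. g (k+1))"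
    by (simp add: f_def g_def sum.distrib)
  also have "(\<Sum>k\<in>{j - int (Suc r)..j}. f k) = (\<Sum>k\<in>{j - int r..j}. f k)"
  proof -
    have "{j - int (Suc r)..j} = insert (j - int r - 1) {j - int r..j}" by auto
    then show ?thesis using z1 by (simp add: f_def)
  qed
  also have "(\<Sum>k\<in>{j - int (Suc r)..j}. g (k+1)) = (\<Sum>k\<in>{j - int r..j+1}. g k)"
  proof -
    have "(\<lambda>k. k + 1) ` {j - int (Suc r)..j} = {j - int r..j+1}"
      by (auto simp: image_iff intro!: bexI[where x="_ - 1"])
    moreover have "inj_on (\<lambda>k::int. k + 1) A" for A by (auto simp: inj_on_def)
    ultimately show ?thesis using sum.reindex[of "\<lambda>k::int. k + 1" "{j - int (Suc r)..j}" g]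
      by (simp add: comp_def)
  qed
  also have "(\<Sum>k\<in>{j - int r..j+1}. g k) = (\<Sum>k\<in>{j - int r..j}. g k)"
  proof -
    have "{j - int r..j+1} = insert (j + 1) {j - int r..j}" by auto
    then show ?thesis using z2 by (simp add: g_def)
  qed
  also have "(\<Sum>k\<in>{j - int r..j}. f k) + (\<Sum>k\<in>{j - int r..j}. g k)
      = (\<Sum>k\<in>{j - int r..j}. bspline t k r x)"
    by (simp add: f_def g_def sum.distrib[symmetric] algebra_simps)
  finally show ?case using Suc.IH by simp
qed




lemma find_interval:
  fixes t :: "int \<Rightarrow> real"
  assumes "mono t"
  shows "t (i - 1) \<le> x \<Longrightarrow> x < t (i - 1 + int n) \<Longrightarrow>
    \<exists>m. i \<le> m \<and> m \<le> i - 1 + int n \<and> t (m - 1) \<le> x \<and> x < t m"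
proof (induction n)
  case 0 then show ?case by simp
next
  case (Suc n)
  show ?case
  proof (cases "x < t (i - 1 + int n)")
    case True then show ?thesis using Suc by force
  next
    case False
    have e: "i + int n - 1 = i - 1 + int n" by simp
    have "t (i + int n - 1) \<le> x" using False unfolding e by simp
    then show ?thesis using Suc.prems by (intro exI[of _ "i + int n"]) (auto simp: algebra_simps)
  qed
qed

lemma exists_interval:
  fixes t :: "int \<Rightarrow> real"
  assumes "mono t" "filterlim t at_top at_top" "filterlim t at_bot at_bot"
  shows "\<exists>j. t (j - 1) \<le> x \<and> x < t j"
proof -
  have "eventually (\<lambda>n. x + 1 \<le> t n) at_top" using assms(2) by (simp add: filterlim_at_top)
  then obtain N where N0: "\<forall>n\<ge>N. x + 1 \<le> t n" by (auto simp: eventually_at_top_linorder)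
  then have N: "\<forall>n\<ge>N. t n > x" by force
  have "eventually (\<lambda>n. t n \<le> x - 1) at_bot" using assms(3) by (simp add: filterlim_at_bot)
  then obtain M where M0: "\<forall>n\<le>M. t n \<le> x - 1" by (auto simp: eventually_at_bot_linorder)
  then have M: "\<forall>n\<le>M. t n < x" by force
  define i where "i = min M N - 1 + 1"
  have "t (min M N - 1) < x" using M by simp
  then have i1: "t (i - 1) \<le> x" by (simp add: i_def)
  have "0 \<le> N - (i - 1)" by (simp add: i_def)
  then have "N = i - 1 + int (nat (N - (i - 1)))" by simp
  then have "x < t (i - 1 + int (nat (N - (i - 1))))" using N by (metis order_refl)
  from find_interval[OF assms(1) i1 this] show ?thesis by blast
qed

lemma bs_le1:
  assumes "mono t" "filterlim t at_top at_top" "filterlim t at_bot at_bot"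
  shows "bspline t k r x \<le> 1"
proof -
  obtain j where j: "t (j - 1) \<le> x" "x < t j" using exists_interval[OF assms] by blast
  show ?thesis
  proof (cases "k \<in> {j - int r..j}")
    case True
    then have "bspline t k r x \<le> (\<Sum>k\<in>{j - int r..j}. bspline t k r x)"
      by (intro member_le_sum) (auto simp: bs_nonneg[OF assms(1)])
    then show ?thesis using bs_pu[OF assms(1) j] by simp
  next
    case False
    have "bspline t k r x = 0"
    proof (rule ccontr)
      assume "bspline t k r x \<noteq> 0"
      from bs_supp[OF assms(1) this] have "t (k-1) \<le> x" "x < t (k + int r)" by auto
      moreover have "k - 1 < j"
      proof (rule ccontr)
        assume "\<not> k - 1 < j" then have "t j \<le> t (k-1)" using assms(1) by (simp add: mono_def)
        then show False using j \<open>t (k-1) \<le> x\<close> by simp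
      qed
      moreover have "j - 1 < k + int r"
      proof (rule ccontr)
        assume "\<not> j - 1 < k + int r" then have "t (k + int r) \<le> t (j - 1)" using assms(1) by (simp add: mono_def)
        then show False using j \<open>x < t (k + int r)\<close> by simp
      qed
      ultimately show False using False by auto
    qed
    then show ?thesis by simp
  qed
qed

lemma denom_bounds:
  assumes "mono t" "filterlim t at_top at_top" "filterlim t at_bot at_bot"
    and w: "\<forall>i. wmin \<le> w i \<and> w i \<le> wmax"
  shows "wmin \<le> infsum (\<lambda>k. w k * bspline t k q x) UNIV \<and> infsum (\<lambda>k. w k * bspline t k q x) UNIV \<le> wmax"
proof -
  obtain j where j: "t (j - 1) \<le> x" "x < t j" using exists_interval[OF assms(1-3)] by blast
  define F where "F = {j - int q..j}"
  have z: "bspline t k q x = 0" if "k \<notin> F" for k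
  proof (rule ccontr)
    assume "bspline t k q x \<noteq> 0"
    from bs_supp[OF assms(1) this] have "t (k-1) \<le> x" "x < t (k + int q)" by auto
    moreover have "k - 1 < j"
    proof (rule ccontr)
      assume "\<not> k - 1 < j" then have "t j \<le> t (k-1)" using assms(1) by (simp add: mono_def)
      then show False using j \<open>t (k-1) \<le> x\<close> by simp
    qed
    moreover have "j - 1 < k + int q"
    proof (rule ccontr)
      assume "\<not> j - 1 < k + int q" then have "t (k + int q) \<le> t (j - 1)" using assms(1) by (simp add: mono_def)
      then show False using j \<open>x < t (k + int q)\<close> by simp
    qed
    ultimately show False using that by (auto simp: F_def)
  qed
  have "infsum (\<lambda>k. w k * bspline t k q x) UNIV = infsum (\<lambda>k. w k * bspline t k q x) F"
    by (rule infsum_cong_neutral) (auto simp: z)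
  also have "\<dots> = (\<Sum>k\<in>F. w k * bspline t k q x)" by (simp add: F_def)
  finally have eq: "infsum (\<lambda>k. w k * bspline t k q x) UNIV = (\<Sum>k\<in>F. w k * bspline t k q x)" .
  have pu: "(\<Sum>k\<in>F. bspline t k q x) = 1" using bs_pu[OF assms(1) j] by (simp add: F_def)
  have "(\<Sum>k\<in>F. wmin * bspline t k q x) \<le> (\<Sum>k\<in>F. w k * bspline t k q x)"
    by (intro sum_mono mult_right_mono) (auto simp: w bs_nonneg[OF assms(1)])
  moreover have "(\<Sum>k\<in>F. w k * bspline t k q x) \<le> (\<Sum>k\<in>F. wmax * bspline t k q x)"
    by (intro sum_mono mult_right_mono) (auto simp: w bs_nonneg[OF assms(1)])
  ultimately show ?thesis using pu by (simp add: eq sum_distrib_left[symmetric])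
qed

lemma bs_ub_left:
  assumes "mono t" "filterlim t at_top at_top" "filterlim t at_bot at_bot" "0 < g"
  shows "(\<forall>k. i - 1 \<le> k \<longrightarrow> k \<le> i + int r \<longrightarrow> t k = t (i-1) \<or> t (i-1) + g \<le> t k) \<Longrightarrow>
    t (i-1) \<le> x \<Longrightarrow> x < t (i-1) + g \<Longrightarrow> t (i-1) + g \<le> t (i - 1 + int r) \<Longrightarrow>
    bspline t i r x \<le> real r * (x - t (i-1)) / g"
proof (induction r arbitrary: i)
  case 0 then show ?case using assms by simp
next
  case (Suc r)
  define a where "a = t (i - 1)"
  have e1: "i - 1 + int (Suc r) = i + int r" by simp
  have ha: "a + g \<le> t (i + int r)" using Suc.prems(4) by (simp add: a_def)
  have b1: "bs_beta t (i - 1) (Suc r) x = (x - a) / (t (i + int r) - a)"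
    unfolding bs_beta_def e1 a_def using ha assms(4) by (auto simp: a_def)
  have "bs_beta t (i - 1) (Suc r) x \<le> (x - a) / g"
    unfolding b1 using ha assms(4) Suc.prems(2) by (intro divide_left_mono) (auto simp: a_def)
  then have T1: "bs_beta t (i - 1) (Suc r) x * bspline t i r x \<le> (x - a) / g"
  proof -
    assume h: "bs_beta t (i - 1) (Suc r) x \<le> (x - a) / g"
    have "0 \<le> bs_beta t (i - 1) (Suc r) x" unfolding b1 using ha assms(4) Suc.prems(2)
      by (auto simp: a_def)
    then have "bs_beta t (i - 1) (Suc r) x * bspline t i r x \<le> bs_beta t (i - 1) (Suc r) x * 1"
      by (intro mult_left_mono bs_le1[OF assms(1-3)])
    then show ?thesis using h by simp
  qed
  have T2: "(1 - bs_beta t i (Suc r) x) * bspline t (i+1) r x \<le> real r * (x - a) / g"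
  proof (cases "bspline t (i+1) r x = 0")
    case True
    then show ?thesis using Suc.prems(2) assms(4) by (simp add: a_def)
  next
    case False
    note c2 = bs_coef2[OF assms(1) False]
    have s: "t i \<le> x" using bs_supp[OF assms(1) False] by simp
    have "t i = a \<or> a + g \<le> t i" using Suc.prems(1) by (auto simp: a_def)
    then have ti: "t i = a" using s Suc.prems(3) by (auto simp: a_def)
    have IH: "bspline t (i+1) r x \<le> real r * (x - a) / g"
      using Suc.IH[of "i+1"] Suc.prems ti by (auto simp: a_def algebra_simps)
    have "(1 - bs_beta t i (Suc r) x) * bspline t (i+1) r x \<le> 1 * bspline t (i+1) r x"
      using c2 bs_nonneg[OF assms(1)] by (intro mult_right_mono) auto
    then show ?thesis using IH by simp
  qed
  have "bspline t i (Suc r) x \<le> (x - a) / g + real r * (x - a) / g"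
    using T1 T2 by simp
  also have "\<dots> = real (Suc r) * (x - a) / g" using assms(4) by (simp add: field_simps)
  finally show ?case by (simp add: a_def)
qed

lemma bs_lb:
  assumes "mono t" "0 < d" "0 < H"
  shows "i \<le> m \<Longrightarrow> m \<le> i + int r \<Longrightarrow> t (m-1) + d \<le> x \<Longrightarrow> x + d \<le> t m \<Longrightarrow>
    t (i + int r) - t (i-1) \<le> H \<Longrightarrow> (d/H)^r \<le> bspline t i r x"
proof (induction r arbitrary: i)
  case 0
  then show ?case using assms by (simp add: indicator_def)
next
  case (Suc r)
  have mo: "\<And>a b. a \<le> b \<Longrightarrow> t a \<le> t b" using assms(1) by (simp add: mono_def)
  have nn1: "0 \<le> bs_beta t (i - 1) (Suc r) x * bspline t i r x"
  proof (cases "bspline t i r x = 0")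
    case False
    then show ?thesis using bs_coef1[OF assms(1) False] bs_nonneg[OF assms(1)] by simp
  qed simp
  have nn2: "0 \<le> (1 - bs_beta t i (Suc r) x) * bspline t (i + 1) r x"
  proof (cases "bspline t (i+1) r x = 0")
    case False
    then show ?thesis using bs_coef2[OF assms(1) False] bs_nonneg[OF assms(1)] by simp
  qed simp
  have dH: "0 \<le> d / H" using assms by simp
  show ?case
  proof (cases "m \<le> i + int r")
    case True
    have e1: "i - 1 + int (Suc r) = i + int r" by simp
    have A1: "t (i-1) \<le> t (m-1)" using Suc.prems by (intro mo) simp
    have A2: "t m \<le> t (i + int r)" using True by (intro mo) simp
    have A3: "t (i + int r) \<le> t (i + int (Suc r))" by (intro mo) simp
    have num: "d \<le> x - t (i-1)" using A1 Suc.prems by simp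
    have den: "t (i + int r) - t (i-1) \<le> H" "0 < t (i + int r) - t (i-1)"
      using A1 A2 A3 Suc.prems assms by auto
    have b1: "bs_beta t (i - 1) (Suc r) x = (x - t (i-1)) / (t (i + int r) - t (i-1))"
      unfolding bs_beta_def e1 using den by auto
    have "d / H \<le> bs_beta t (i - 1) (Suc r) x"
      unfolding b1 using num den assms by (intro frac_le) auto
    moreover have "(d/H)^r \<le> bspline t i r x"
      using Suc.IH[of i] Suc.prems True den by auto
    ultimately have "d / H * (d/H)^r \<le> bs_beta t (i - 1) (Suc r) x * bspline t i r x"
      using dH by (intro mult_mono) auto
    then show ?thesis using nn2 by simp
  next
    case False
    then have mi: "m = i + 1 + int r" using Suc.prems by simp
    have e1: "i + int (Suc r) = i + 1 + int r" by simp
    have A1: "t (i-1) \<le> t i" by (intro mo) simp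
    have A2: "t i \<le> t (m-1)" using mi by (intro mo) simp
    have num: "d \<le> t (i + 1 + int r) - x" using Suc.prems mi by simp
    have den: "t (i + 1 + int r) - t i \<le> H" "0 < t (i + 1 + int r) - t i"
      using A1 A2 Suc.prems assms mi by (auto simp: algebra_simps)
    have b1: "1 - bs_beta t i (Suc r) x = (t (i + 1 + int r) - x) / (t (i + 1 + int r) - t i)"
      unfolding bs_beta_def e1 using den by (auto simp: field_simps)
    have "d / H \<le> 1 - bs_beta t i (Suc r) x"
      unfolding b1 using num den assms by (intro frac_le) auto
    moreover have "(d/H)^r \<le> bspline t (i+1) r x"
      using Suc.IH[of "i+1"] Suc.prems mi den by (auto simp: algebra_simps)
    ultimately have "d / H * (d/H)^r \<le> (1 - bs_beta t i (Suc r) x) * bspline t (i+1) r x"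
      using dH by (intro mult_mono) auto
    then show ?thesis using nn1 by simp
  qed
qed




lemma consec:
  fixes t z :: "int \<Rightarrow> real"
  assumes "mono t" "strict_mono z" "range z = range t" "t k < t (k+1)" "t k = z u"
  shows "t (k+1) = z (u+1)"
proof -
  obtain v where v: "t (k+1) = z v" using assms(3) by (metis rangeI image_iff)
  obtain k' where k': "z (u+1) = t k'" using assms(3) by (metis rangeI image_iff)
  have "z u < z v" using assms v by simp
  then have "u < v" using assms(2) by (simp add: strict_mono_less)
  then have "z (u+1) \<le> z v" using assms(2) by (simp add: strict_mono_less_eq)
  have "z u < z (u+1)" using assms(2) by (simp add: strict_mono_less)
  then have "t k < t k'" using assms k' by simp
  then have "k < k'" using assms(1) by (metis mono_def not_less)
  then have "t (k+1) \<le> t k'" using assms(1) by (simp add: mono_def)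
  then show ?thesis using \<open>z (u+1) \<le> z v\<close> v k' by simp
qed

lemma walk:
  fixes t z :: "int \<Rightarrow> real"
  assumes "mono t" "strict_mono z" "range z = range t" "t k = z u"
  shows "\<exists>v. t (k + int n) = z v \<and> u \<le> v \<and> v \<le> u + int n"
proof (induction n)
  case 0 then show ?case using assms by auto
next
  case (Suc n)
  then obtain v where v: "t (k + int n) = z v" "u \<le> v" "v \<le> u + int n" by blast
  have "t (k + int n) \<le> t (k + int n + 1)" using assms(1) by (simp add: mono_def)
  then show ?case
  proof (cases "t (k + int n) < t (k + int n + 1)")
    case True note 1 = True
    have "t (k + int n + 1) = z (v + 1)" using consec[OF assms(1-3) 1 v(1)] .
    then show ?thesis using v by (intro exI[of _ "v+1"]) (auto simp: algebra_simps)
  next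
    case False then have "t (k + int n + 1) = t (k + int n)" using \<open>t (k + int n) \<le> t (k + int n + 1)\<close> by simp
    then show ?thesis using v by (intro exI[of _ v]) (auto simp: algebra_simps)
  qed
qed

lemma gapgrow:
  fixes z :: "int \<Rightarrow> real"
  assumes "strict_mono z" "K > 0"
    and mesh: "\<forall>j. max ((z j - z (j - 1)) / (z (j - 1) - z (j - 2)))
                ((z j - z (j - 1)) / (z (j + 1) - z j)) \<le> K"
  shows "z (u + int n) - z (u + int n - 1) \<le> K^n * (z u - z (u - 1))"
proof (induction n)
  case 0 then show ?case by simp
next
  case (Suc n)
  define j where "j = u + int n + 1"
  have "(z j - z (j - 1)) / (z (j - 1) - z (j - 2)) \<le> K" using mesh[rule_format, of j] by simp
  moreover have "0 < z (j - 1) - z (j - 2)" using assms(1) by (simp add: strict_mono_less)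
  ultimately have "z j - z (j - 1) \<le> K * (z (j - 1) - z (j - 2))" by (simp add: divide_simps)
  also have "z (j - 1) - z (j - 2) = z (u + int n) - z (u + int n - 1)" by (simp add: j_def)
  also have "K * \<dots> \<le> K * (K^n * (z u - z (u - 1)))" using Suc.IH assms(2) by simp
  finally show ?case by (simp add: j_def algebra_simps)
qed

lemma maxgap:
  fixes t :: "int \<Rightarrow> real"
  assumes "mono t"
  shows "\<exists>m. i \<le> m \<and> m \<le> i + int q \<and> (t (i + int q) - t (i-1)) / (real q + 1) \<le> t m - t (m-1)"
proof (rule ccontr)
  assume H: "\<not> ?thesis"
  define f where "f n = t (i - 1 + int n)" for n
  have "(\<Sum>n<Suc q. f (Suc n) - f n) = f (Suc q) - f 0" by (rule sum_lessThan_telescope)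
  also have "\<dots> = t (i + int q) - t (i-1)" by (simp add: f_def algebra_simps)
  finally have eq: "(\<Sum>n<Suc q. f (Suc n) - f n) = t (i + int q) - t (i-1)" .
  have "(\<Sum>n<Suc q. f (Suc n) - f n) < (\<Sum>n<Suc q. (t (i + int q) - t (i-1)) / (real q + 1))"
  proof (rule sum_strict_mono)
    fix n assume "n \<in> {..<Suc q}"
    then have "i \<le> i + int n" "i + int n \<le> i + int q" by auto
    then have "\<not> ((t (i + int q) - t (i-1)) / (real q + 1) \<le> t (i + int n) - t (i + int n - 1))"
      using H by blast
    then show "f (Suc n) - f n < (t (i + int q) - t (i-1)) / (real q + 1)"
      by (simp add: f_def algebra_simps)
  qed auto
  also have "\<dots> = t (i + int q) - t (i-1)"
  proof -
    have "(1 + real q) / (real q + 1) = 1" by simp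
    then show ?thesis by (simp add: divide_simps)
  qed
  finally show False using eq by simp
qed




lemma bs_pos:
  fixes t :: "int \<Rightarrow> real"
  assumes "mono t" "i \<le> m" "m \<le> i + int r" "t (m-1) < x" "x < t m"
  shows "0 < bspline t i r x"
proof -
  define d where "d = min (x - t (m-1)) (t m - x)"
  have d: "0 < d" using assms by (simp add: d_def)
  have "t (i-1) \<le> t (m-1)" "t m \<le> t (i + int r)" using assms(1-3) by (auto simp: mono_def)
  then have H: "0 < t (i + int r) - t (i-1)" using assms by simp
  have "(d / (t (i + int r) - t (i-1)))^r \<le> bspline t i r x"
    by (rule bs_lb[OF assms(1) d H assms(2,3)]) (auto simp: d_def)
  moreover have "0 < (d / (t (i + int r) - t (i-1)))^r" using d H by simp
  ultimately show ?thesis by linarith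
qed

lemma large_set:
  fixes t :: "int \<Rightarrow> real"
  assumes "mono t" "t (i-1) < t (i + int q)"
  shows "\<exists>lo hi. t (i-1) \<le> lo \<and> hi \<le> t (i + int q) \<and>
    (t (i + int q) - t (i-1)) / (3 * (real q + 1)) \<le> hi - lo \<and>
    (\<forall>x. lo \<le> x \<and> x \<le> hi \<longrightarrow> (1 / (3 * (real q + 1)))^q \<le> bspline t i q x)"
proof -
  define h where "h = t (i + int q) - t (i-1)"
  have h: "0 < h" using assms by (simp add: h_def)
  obtain m where m: "i \<le> m" "m \<le> i + int q" "h / (real q + 1) \<le> t m - t (m-1)"
    using maxgap[OF assms(1), of i q] by (auto simp: h_def)
  define d where "d = (t m - t (m-1)) / 3"
  have hq: "0 < h / (real q + 1)" using h by simp
  have eq3: "h / (3 * (real q + 1)) = (h / (real q + 1)) / 3" by simp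
  have "0 < t m - t (m-1)" using m(3) hq by linarith
  then have d1: "0 < d" unfolding d_def by simp
  have "(h / (real q + 1)) / 3 \<le> (t m - t (m-1)) / 3" using m(3) by (rule divide_right_mono) simp
  then have d: "0 < d" "h / (3 * (real q + 1)) \<le> d" using d1 unfolding d_def eq3 by auto
  have mm: "t (i-1) \<le> t (m-1)" "t m \<le> t (i + int q)" using assms(1) m by (auto simp: mono_def)
  show ?thesis
  proof (intro exI conjI allI impI)
    show "t (i-1) \<le> t (m-1) + d" using mm d by simp
    show "t m - d \<le> t (i + int q)" using mm d by simp
    have e: "t m - d - (t (m-1) + d) = d" unfolding d_def by (simp add: field_simps)
    from d(2) have "(t (i + int q) - t (i-1)) / (3 * (real q + 1)) \<le> d" by (simp only: h_def)
    then show "(t (i + int q) - t (i-1)) / (3 * (real q + 1)) \<le> t m - d - (t (m-1) + d)"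
      using e by linarith
    fix x assume x: "t (m-1) + d \<le> x \<and> x \<le> t m - d"
    have "(d/h)^q \<le> bspline t i q x"
      by (rule bs_lb[OF assms(1) d(1) h m(1,2)]) (use x in \<open>auto simp: h_def\<close>)
    moreover have "1 / (3 * (real q + 1)) \<le> d / h" using d h by (simp add: divide_simps mult.commute)
    then have "(1 / (3 * (real q + 1)))^q \<le> (d/h)^q" by (intro power_mono) auto
    ultimately show "(1 / (3 * (real q + 1)))^q \<le> bspline t i q x" by linarith
  qed
qed




lemma small_set:
  fixes t z :: "int \<Rightarrow> real"
  assumes mo: "mono t" and lim: "filterlim t at_top at_top" "filterlim t at_bot at_bot"
    and zs: "strict_mono z" "range z = range t" and K: "K > 0"
    and mesh: "\<forall>j. max ((z j - z (j - 1)) / (z (j - 1) - z (j - 2)))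
                ((z j - z (j - 1)) / (z (j + 1) - z j)) \<le> K"
    and q: "q > 0" and ab: "t (i-1) < t (i + int q)" and eps: "0 < \<epsilon>" "\<epsilon> \<le> 1"
  shows "\<exists>lo hi. t (i-1) \<le> lo \<and> hi \<le> t (i + int q) \<and>
    \<epsilon> * (t (i + int q) - t (i-1)) / ((real q + 1) * max 1 K ^ q) \<le> hi - lo \<and>
    (\<forall>x. lo < x \<and> x < hi \<longrightarrow> 0 < bspline t i q x \<and> bspline t i q x \<le> real q * \<epsilon>)"
proof -
  define a where "a = t (i-1)"
  define b where "b = t (i + int q)"
  define h where "h = b - a"
  define K' where "K' = max 1 K"
  have h: "0 < h" using ab by (simp add: h_def a_def b_def)
  have monoI: "\<And>u v. u \<le> v \<Longrightarrow> t u \<le> t v" using mo by (simp add: mono_def)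
  have K'1: "1 \<le> K'^q" by (simp add: K'_def)
  have den: "1 \<le> (real q + 1) * K'^q"
  proof -
    have "1 * 1 \<le> (real q + 1) * K'^q" using K'1 by (intro mult_mono) auto
    then show ?thesis by simp
  qed
  have bnd: "\<epsilon> * h / ((real q + 1) * K'^q) \<le> \<epsilon> * h"
  proof -
    have "\<epsilon> * h * 1 \<le> \<epsilon> * h * ((real q + 1) * K'^q)" using den eps h by (intro mult_left_mono) auto
    moreover have "0 < (real q + 1) * K'^q" using den by linarith
    ultimately show ?thesis by (simp add: divide_le_eq)
  qed
  have eh: "\<epsilon> * h \<le> h" using eps h mult_right_mono[of \<epsilon> 1 h] by simp
  show ?thesis
  proof (cases "t (i + int q - 1) \<le> a")
    case True
    have aq: "t (i + int q - 1) = a" using True monoI[of "i-1" "i + int q - 1"] q by (simp add: a_def)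
    obtain r where r: "q = Suc r" using q by (cases q) auto
    have ti: "t i = a" using monoI[of "i-1" i] monoI[of i "i + int q - 1"] aq q by (simp add: a_def)
    show ?thesis
    proof (intro exI conjI allI impI)
      show "t (i-1) \<le> b - \<epsilon> * h" using eh by (simp add: a_def h_def)
      show "b \<le> t (i + int q)" by (simp add: b_def)
      show "\<epsilon> * (t (i + int q) - t (i-1)) / ((real q + 1) * max 1 K ^ q) \<le> b - (b - \<epsilon> * h)"
        using bnd by (simp add: h_def a_def b_def K'_def)
      fix x assume x: "b - \<epsilon> * h < x \<and> x < b"
      have xa: "a < x" using x eh by (simp add: h_def)
      show "0 < bspline t i q x"
        using bs_pos[OF mo, of i "i + int q" q x] aq x xa by (simp add: b_def)
      have z1: "bspline t i r x = 0"
      proof (rule ccontr)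
        assume "bspline t i r x \<noteq> 0"
        from bs_supp[OF mo this] have "x < t (i + int r)" by simp
        moreover have "i + int r = i + int q - 1" using r by simp
        ultimately show False using aq xa by simp
      qed
      have e1: "i + int (Suc r) = i + int q" using r by simp
      have b1: "1 - bs_beta t i (Suc r) x = (b - x) / h"
        unfolding bs_beta_def e1 using h ti by (simp add: b_def h_def field_simps)
      have "(b - x) / h \<le> \<epsilon>" using x h by (simp add: divide_le_eq)
      moreover have "0 \<le> (b - x) / h" using x h by simp
      ultimately have "(1 - bs_beta t i (Suc r) x) * bspline t (i+1) r x \<le> \<epsilon> * 1"
        unfolding b1 using bs_nonneg[OF mo] bs_le1[OF mo lim] by (intro mult_mono) auto
      then have "bspline t i q x \<le> \<epsilon>" using z1 r by simp
      also have "\<epsilon> \<le> real q * \<epsilon>" using q eps by simp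
      finally show "bspline t i q x \<le> real q * \<epsilon>" .
    qed
  next
    case False
    have a0: "t (i-1) \<le> a" by (simp add: a_def)
    have "a < t (i - 1 + int q)" using False by (simp add: algebra_simps)
    from find_interval[OF mo a0 this] obtain m0 where
      m0: "i \<le> m0" "m0 \<le> i - 1 + int q" "t (m0 - 1) \<le> a" "a < t m0" by blast
    have tm0: "t (m0 - 1) = a" using m0 monoI[of "i-1" "m0-1"] by (simp add: a_def)
    define g where "g = t m0 - a"
    have g: "0 < g" using m0 by (simp add: g_def)
    have dich: "\<forall>k. i - 1 \<le> k \<longrightarrow> k \<le> i + int q \<longrightarrow> t k = t (i-1) \<or> t (i-1) + g \<le> t k"
    proof (intro allI impI)
      fix k assume k: "i - 1 \<le> k" "k \<le> i + int q"
      show "t k = t (i-1) \<or> t (i-1) + g \<le> t k"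
      proof (cases "k \<le> m0 - 1")
        case True
        then show ?thesis using monoI[of k "m0-1"] monoI[of "i-1" k] k tm0 by (simp add: a_def)
      next
        case False
        then show ?thesis using monoI[of m0 k] by (simp add: a_def g_def)
      qed
    qed
    have gb: "a + g \<le> t (i - 1 + int q)" using monoI[of m0 "i - 1 + int q"] m0 by (simp add: g_def)
    obtain m where m: "i \<le> m" "m \<le> i + int q" "h / (real q + 1) \<le> t m - t (m-1)"
      using maxgap[OF mo, of i q] by (auto simp: h_def a_def b_def)
    have lpos: "0 < t m - t (m-1)" using m(3) h by (smt (verit) divide_pos_pos of_nat_0_le_iff)
    have mm0: "m0 \<le> m"
    proof (rule ccontr)
      assume "\<not> m0 \<le> m"
      then have "t m \<le> a" "a \<le> t (m-1)" using monoI[of m "m0-1"] monoI[of "i-1" "m-1"] tm0 m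
        by (auto simp: a_def)
      then show False using lpos by simp
    qed
    have "a \<in> range z" using zs(2) by (simp add: a_def)
    then obtain p where p: "z p = a" by auto
    have zp1: "t m0 = z (p+1)" using consec[OF mo zs, of "m0-1" p] tm0 p m0 by simp
    obtain v where v: "t (m0 - 1 + int (nat (m - m0))) = z v" "p \<le> v" "v \<le> p + int (nat (m - m0))"
      using walk[OF mo zs, of "m0-1" p "nat (m - m0)"] tm0 p by auto
    have v1: "t (m-1) = z v" "v \<le> p + (m - m0)" using v mm0 by auto
    have zv1: "t m = z (v+1)" using consec[OF mo zs, of "m-1" v] v1 lpos by simp
    define n where "n = nat (v - p)"
    have gg: "z (p + 1 + int n) - z (p + 1 + int n - 1) \<le> K^n * (z (p+1) - z (p + 1 - 1))"
      by (rule gapgrow[OF zs(1) K mesh])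
    have pn: "p + 1 + int n = v + 1" using v by (simp add: n_def)
    have ell: "t m - t (m-1) \<le> K^n * g" using gg zv1 v1 zp1 p unfolding pn by (simp add: g_def)
    have "n \<le> q" using v1 m m0 by (simp add: n_def)
    have "K^n \<le> K'^n" using K by (intro power_mono) (auto simp: K'_def)
    also have "\<dots> \<le> K'^q" using \<open>n \<le> q\<close> by (intro power_increasing) (auto simp: K'_def)
    finally have "t m - t (m-1) \<le> K'^q * g" using ell g by (meson mult_right_mono less_imp_le order_trans)
    then have hg: "h / (real q + 1) \<le> K'^q * g" using m(3) by simp
    have gbig: "h / ((real q + 1) * K'^q) \<le> g"
    proof -
      have "h / ((real q + 1) * K'^q) = (h / (real q + 1)) / K'^q" by simp
      also have "\<dots> \<le> g" using hg K'1 by (simp add: divide_le_eq mult_ac)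
      finally show ?thesis .
    qed
    show ?thesis
    proof (intro exI conjI allI impI)
      show "t (i-1) \<le> a" by (simp add: a_def)
      have "\<epsilon> * g \<le> g" using eps g by simp
      moreover have "t m0 = a + g" by (simp add: g_def)
      ultimately show "a + \<epsilon> * g \<le> t (i + int q)" using monoI[of m0 "i + int q"] m0 by linarith
      have "\<epsilon> * (h / ((real q + 1) * K'^q)) \<le> \<epsilon> * g" using gbig eps by (intro mult_left_mono) auto
      then show "\<epsilon> * (t (i + int q) - t (i-1)) / ((real q + 1) * max 1 K ^ q) \<le> a + \<epsilon> * g - a"
        by (simp add: h_def a_def b_def K'_def times_divide_eq_right)
      fix x assume x: "a < x \<and> x < a + \<epsilon> * g"
      have xg: "x < a + g" using x \<open>\<epsilon> * g \<le> g\<close> by simp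
      show "0 < bspline t i q x"
        using bs_pos[OF mo m0(1), of q x] m0 tm0 x xg by (simp add: g_def)
      have "bspline t i q x \<le> real q * (x - t (i-1)) / g"
        by (rule bs_ub_left[OF mo lim g dich]) (use x xg gb in \<open>auto simp: a_def\<close>)
      also have "\<dots> \<le> real q * (\<epsilon> * g) / g" using x g
        by (intro divide_right_mono mult_left_mono) (auto simp: a_def)
      also have "\<dots> = real q * \<epsilon>" using g by simp
      finally show "bspline t i q x \<le> real q * \<epsilon>" .
    qed
  qed
qed




lemma slob_lower:
  assumes "A \<subseteq> S" "Sm \<subseteq> S" "A \<in> sets lborel" "Sm \<in> sets lborel"
    and pt: "\<And>r s. r \<in> A \<Longrightarrow> s \<in> Sm \<Longrightarrow> c \<le> \<bar>v r - v s\<bar>\<^sup>2 * \<bar>r - s\<bar> powr (-1 - 2 * \<sigma>)"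
  shows "ennreal c * emeasure lborel Sm * emeasure lborel A \<le> slobodeckij_sq \<sigma> S v"
proof -
  have inner: "ennreal c * emeasure lborel Sm \<le>
      (\<integral>\<^sup>+ s\<in>S. ennreal (\<bar>v r - v s\<bar>\<^sup>2 * \<bar>r - s\<bar> powr (-1 - 2 * \<sigma>)) \<partial>lborel)" if r: "r \<in> A" for r
  proof -
    have "ennreal c * emeasure lborel Sm = (\<integral>\<^sup>+ s\<in>Sm. ennreal c \<partial>lborel)"
      using assms(4) by (simp add: nn_integral_cmult_indicator)
    also have "\<dots> \<le> (\<integral>\<^sup>+ s\<in>S. ennreal (\<bar>v r - v s\<bar>\<^sup>2 * \<bar>r - s\<bar> powr (-1 - 2 * \<sigma>)) \<partial>lborel)"
    proof (rule nn_integral_mono)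
      fix s
      show "ennreal c * indicator Sm s \<le> ennreal (\<bar>v r - v s\<bar>\<^sup>2 * \<bar>r - s\<bar> powr (-1 - 2 * \<sigma>)) * indicator S s"
      proof (cases "s \<in> Sm")
        case True
        then show ?thesis using assms(2) pt[OF r True] by (auto intro: ennreal_leI)
      qed simp
    qed
    finally show ?thesis .
  qed
  have "ennreal c * emeasure lborel Sm * emeasure lborel A = (\<integral>\<^sup>+ r\<in>A. ennreal c * emeasure lborel Sm \<partial>lborel)"
    using assms(3) by (simp add: nn_integral_cmult_indicator)
  also have "\<dots> \<le> slobodeckij_sq \<sigma> S v"
    unfolding slobodeckij_sq_def
  proof (rule nn_integral_mono)
    fix r
    show "ennreal c * emeasure lborel Sm * indicator A r \<le>
      (\<integral>\<^sup>+ s\<in>S. ennreal (\<bar>v r - v s\<bar>\<^sup>2 * \<bar>r - s\<bar> powr (-1 - 2 * \<sigma>)) \<partial>lborel) * indicator S r"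
    proof (cases "r \<in> A")
      case True
      then show ?thesis using assms(1) inner[OF True] by auto
    qed simp
  qed
  finally show ?thesis .
qed




definition cst_c1 :: "nat \<Rightarrow> real" where "cst_c1 q = 1 / (3 * (real q + 1))"
definition cst_d1 :: "nat \<Rightarrow> real \<Rightarrow> real \<Rightarrow> real" where
  "cst_d1 q wmin wmax = wmin / wmax * cst_c1 q ^ q"
definition cst_eps :: "nat \<Rightarrow> real \<Rightarrow> real \<Rightarrow> real" where
  "cst_eps q wmin wmax = cst_d1 q wmin wmax * wmin / (2 * real q * wmax)"
definition cst_kappa :: "nat \<Rightarrow> real \<Rightarrow> real \<Rightarrow> real \<Rightarrow> real" where
  "cst_kappa q wmin wmax K = (cst_d1 q wmin wmax / 2)^2 * cst_c1 q *
     (cst_eps q wmin wmax / ((real q + 1) * max 1 K ^ q))"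
definition cst_C :: "nat \<Rightarrow> real \<Rightarrow> real \<Rightarrow> real \<Rightarrow> real" where
  "cst_C q wmin wmax K = 1 / (cst_c1 q * cst_kappa q wmin wmax K)"

lemma cst_pos:
  assumes "q > 0" "wmin > 0" "wmax > 0"
  shows "0 < cst_c1 q" "cst_c1 q \<le> 1" "0 < cst_d1 q wmin wmax" "0 < cst_eps q wmin wmax"
    "0 < cst_kappa q wmin wmax K" "0 < cst_C q wmin wmax K"
proof -
  show c1: "0 < cst_c1 q" by (simp add: cst_c1_def)
  show "cst_c1 q \<le> 1" by (simp add: cst_c1_def)
  show d1: "0 < cst_d1 q wmin wmax" using assms c1 by (simp add: cst_d1_def)
  show e: "0 < cst_eps q wmin wmax" using assms d1 by (simp add: cst_eps_def)
  have "0 < max 1 K ^ q" by simp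
  then show k: "0 < cst_kappa q wmin wmax K" using c1 d1 e unfolding cst_kappa_def
    by (intro mult_pos_pos divide_pos_pos) auto
  show "0 < cst_C q wmin wmax K" using c1 k by (simp add: cst_C_def)
qed

lemma main_fixed:
  fixes t z w :: "int \<Rightarrow> real" and q :: nat
  assumes q: "q > 0" and wpos: "wmin > 0" "wmax > 0" and K: "K > 0"
    and sig: "0 < \<sigma>" "\<sigma> < 1"
    and mo: "mono t" and lim: "filterlim t at_top at_top" "filterlim t at_bot at_bot"
    and zs: "strict_mono z" "range z = range t"
    and w: "\<forall>i. wmin \<le> w i \<and> w i \<le> wmax"
    and mesh: "\<forall>j. max ((z j - z (j - 1)) / (z (j - 1) - z (j - 2)))
                ((z j - z (j - 1)) / (z (j + 1) - z j)) \<le> K"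
    and meas: "measure lebesgue (supp (nurbs t w i q)) > 0"
  shows "ennreal (measure lebesgue (supp (nurbs t w i q)) powr (1 - 2 * \<sigma>))
          \<le> ennreal (cst_C q wmin wmax K) * slobodeckij_sq \<sigma> (supp (nurbs t w i q)) (nurbs t w i q)"
proof -
  define B where "B = bspline t i q"
  define R where "R = nurbs t w i q"
  define S where "S = supp R"
  define D where "D x = infsum (\<lambda>k. w k * bspline t k q x) UNIV" for x
  define a where "a = t (i-1)"
  define b where "b = t (i + int q)"
  define h where "h = b - a"
  define c1 where "c1 = cst_c1 q"
  define d1 where "d1 = cst_d1 q wmin wmax"
  define \<epsilon> where "\<epsilon> = cst_eps q wmin wmax"
  define K' where "K' = max 1 K"
  note cp = cst_pos[OF q wpos] cst_pos(5,6)[OF q wpos, of K]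
  have Cpos: "0 < cst_C q wmin wmax K" and kpos: "0 < cst_kappa q wmin wmax K"
    using cst_pos(5,6)[OF q wpos] by auto
  have wle: "wmin \<le> wmax" using w by (meson order_trans)
  have Db: "wmin \<le> D x \<and> D x \<le> wmax" for x using denom_bounds[OF mo lim w] by (simp add: D_def)
  have Req: "R x = w i * B x / D x" for x by (simp add: R_def B_def D_def nurbs_def)
  have Bnn: "0 \<le> B x" for x by (simp add: B_def bs_nonneg[OF mo])
  have wi: "wmin \<le> w i" "w i \<le> wmax" using w by auto
  have nz: "R x \<noteq> 0 \<longleftrightarrow> B x \<noteq> 0" for x using Db[of x] wi wpos by (simp add: Req)
  have Rlo: "wmin / wmax * B x \<le> R x" for x
  proof -
    have "wmin * B x / wmax \<le> w i * B x / D x"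
      using Db[of x] wi wpos Bnn[of x] by (intro frac_le mult_right_mono mult_nonneg_nonneg) auto
    then show ?thesis by (simp add: Req)
  qed
  have Rhi: "R x \<le> wmax / wmin * B x" for x
  proof -
    have "w i * B x / D x \<le> wmax * B x / wmin"
      using Db[of x] wi wpos Bnn[of x] by (intro frac_le mult_right_mono mult_nonneg_nonneg) auto
    then show ?thesis by (simp add: Req)
  qed
  have nzsub: "{x. R x \<noteq> 0} \<subseteq> {a..b}"
  proof
    fix x assume "x \<in> {x. R x \<noteq> 0}"
    then have "bspline t i q x \<noteq> 0" by (simp add: nz B_def)
    from bs_supp[OF mo this] show "x \<in> {a..b}" by (simp add: a_def b_def)
  qed
  have Ssub: "S \<subseteq> {a..b}" unfolding S_def supp_def
    by (rule closure_minimal[OF nzsub]) simp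
  have ab: "a < b"
  proof (rule ccontr)
    assume "\<not> a < b"
    then have "{x. R x \<noteq> 0} = {}"
    proof (intro equalityI subsetI)
      fix x assume "x \<in> {x. R x \<noteq> 0}"
      then have "bspline t i q x \<noteq> 0" by (simp add: nz B_def)
      from bs_supp[OF mo this] show "x \<in> {}" using \<open>\<not> a < b\<close> by (simp add: a_def b_def)
    qed auto
    then have "S = {}" by (simp add: S_def supp_def)
    then show False using meas by (simp add: S_def R_def)
  qed
  have h: "0 < h" using ab by (simp add: h_def)
  have ab': "t (i-1) < t (i + int q)" using ab by (simp add: a_def b_def)
  obtain lo1 hi1 where L: "a \<le> lo1" "hi1 \<le> b" "h / (3 * (real q + 1)) \<le> hi1 - lo1"
    "\<And>x. lo1 \<le> x \<and> x \<le> hi1 \<Longrightarrow> (1 / (3 * (real q + 1)))^q \<le> B x"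
    using large_set[OF mo ab'] by (auto simp: a_def b_def h_def B_def)
  have d1pos0: "0 < d1" using cp by (simp add: d1_def)
  have epsle: "\<epsilon> \<le> 1"
  proof -
    have "wmin / wmax \<le> 1" using wle wpos by simp
    moreover have "cst_c1 q ^ q \<le> 1" using cp by (simp add: power_le_one)
    ultimately have "d1 \<le> 1" unfolding d1_def cst_d1_def using cp wpos
      by (metis divide_nonneg_nonneg less_imp_le mult_le_one zero_le_power)
    then have "d1 * (wmin / wmax) \<le> 1 * 1" using \<open>wmin / wmax \<le> 1\<close> wpos
      by (intro mult_mono) auto
    moreover have "\<epsilon> = d1 * (wmin / wmax) / (2 * real q)" by (simp add: \<epsilon>_def cst_eps_def d1_def)
    moreover have "1 \<le> 2 * real q" using q by simp
    moreover have "0 \<le> d1 * (wmin / wmax)" using d1pos0 wpos by simp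
    ultimately have "\<epsilon> \<le> d1 * (wmin / wmax) / 1"
      using divide_left_mono[of 1 "2 * real q" "d1 * (wmin / wmax)"] by simp
    then show ?thesis using \<open>d1 * (wmin / wmax) \<le> 1 * 1\<close> by simp
  qed
  obtain lo2 hi2 where Sm: "a \<le> lo2" "hi2 \<le> b"
    "\<epsilon> * h / ((real q + 1) * K'^q) \<le> hi2 - lo2"
    "\<And>x. lo2 < x \<and> x < hi2 \<Longrightarrow> 0 < B x \<and> B x \<le> real q * \<epsilon>"
    using small_set[OF mo lim zs K mesh q ab', of \<epsilon>] cp epsle
    by (auto simp: a_def b_def h_def B_def \<epsilon>_def K'_def)
  have c1h: "0 < c1 * h" using cp h by (simp add: c1_def)
  have A1: "c1 * h \<le> hi1 - lo1" using L(3) by (simp add: c1_def cst_c1_def)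
  have kq: "0 < (real q + 1) * K'^q" by (simp add: K'_def)
  have A2: "0 < hi2 - lo2" using Sm(3) cp h kq by (smt (verit) \<epsilon>_def divide_pos_pos mult_pos_pos)
  have d1pos: "0 < d1" using cp by (simp add: d1_def)
  have RA: "d1 \<le> R x" if "lo1 \<le> x \<and> x \<le> hi1" for x
  proof -
    have "d1 = wmin / wmax * (1 / (3 * (real q + 1)))^q" by (simp add: d1_def cst_d1_def cst_c1_def)
    also have "\<dots> \<le> wmin / wmax * B x" using L(4)[OF that] wpos by (intro mult_left_mono) auto
    also have "\<dots> \<le> R x" by (rule Rlo)
    finally show ?thesis .
  qed
  have RS: "R x \<le> d1 / 2" if "lo2 < x \<and> x < hi2" for x
  proof -
    have "R x \<le> wmax / wmin * B x" by (rule Rhi)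
    also have "\<dots> \<le> wmax / wmin * (real q * \<epsilon>)" using Sm(4)[OF that] wpos by (intro mult_left_mono) auto
    also have "\<dots> = d1 / 2" using q wpos by (simp add: \<epsilon>_def cst_eps_def d1_def field_simps)
    finally show ?thesis .
  qed
  have AS: "{lo1..hi1} \<subseteq> S"
  proof
    fix x assume "x \<in> {lo1..hi1}"
    then have "d1 \<le> R x" using RA[of x] by simp
    then have "R x \<noteq> 0" using d1pos by linarith
    then have "x \<in> {x. R x \<noteq> 0}" by simp
    then show "x \<in> S" unfolding S_def supp_def using closure_subset[of "{x. R x \<noteq> 0}"] by (rule subsetD[rotated])
  qed
  have SS: "{lo2<..<hi2} \<subseteq> S"
  proof
    fix x assume "x \<in> {lo2<..<hi2}"
    then have "B x \<noteq> 0" using Sm(4)[of x] by auto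
    then have "R x \<noteq> 0" using nz[of x] by simp
    then have "x \<in> {x. R x \<noteq> 0}" by simp
    then show "x \<in> S" unfolding S_def supp_def using closure_subset[of "{x. R x \<noteq> 0}"] by (rule subsetD[rotated])
  qed
  define c where "c = (d1/2)^2 * h powr (-1 - 2 * \<sigma>)"
  have pt: "c \<le> \<bar>R r - R s\<bar>\<^sup>2 * \<bar>r - s\<bar> powr (-1 - 2 * \<sigma>)"
    if r: "r \<in> {lo1..hi1}" and s: "s \<in> {lo2<..<hi2}" for r s
  proof -
    have "d1 / 2 \<le> R r - R s" using RA[of r] RS[of s] r s by auto
    then have "d1/2 \<le> \<bar>R r - R s\<bar>" by (rule order_trans[OF _ abs_ge_self])
    then have v: "(d1/2)^2 \<le> \<bar>R r - R s\<bar>\<^sup>2" using d1pos by (intro power_mono) auto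
    have "r \<noteq> s" using \<open>d1 / 2 \<le> R r - R s\<close> d1pos by auto
    then have rs0: "0 < \<bar>r - s\<bar>" by simp
    have "\<bar>r - s\<bar> \<le> h" using r s L Sm by (auto simp: h_def abs_if)
    then have p: "h powr (-1 - 2 * \<sigma>) \<le> \<bar>r - s\<bar> powr (-1 - 2 * \<sigma>)"
      using rs0 sig by (intro powr_mono2') auto
    show ?thesis unfolding c_def using v p by (intro mult_mono) auto
  qed
  have slob: "ennreal c * emeasure lborel {lo2<..<hi2} * emeasure lborel {lo1..hi1} \<le> slobodeckij_sq \<sigma> S R"
    by (rule slob_lower[OF AS SS _ _ pt]) auto
  have c0: "0 \<le> c" by (simp add: c_def)
  have slob': "ennreal (c * (hi2 - lo2) * (hi1 - lo1)) \<le> slobodeckij_sq \<sigma> S R"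
    using slob A1 A2 c1h c0 by (simp add: ennreal_mult)
  have bnd: "bounded {x. R x \<noteq> 0}" using nzsub bounded_subset bounded_closed_interval by blast
  have Slm: "S \<in> lmeasurable" unfolding S_def supp_def by (rule lmeasurable_closure[OF bnd])
  have mS1: "measure lebesgue S \<le> h"
  proof -
    have "measure lebesgue S \<le> measure lebesgue {a..b}"
      by (rule measure_mono_fmeasurable[OF Ssub]) (use Slm in auto)
    then show ?thesis using ab by (simp add: h_def)
  qed
  have mS2: "c1 * h \<le> measure lebesgue S"
  proof -
    have "measure lebesgue {lo1..hi1} \<le> measure lebesgue S"
      by (rule measure_mono_fmeasurable[OF AS]) (use Slm in auto)
    then show ?thesis using A1 c1h by simp
  qed
  define e where "e = 1 - 2 * \<sigma>"
  have LHS: "measure lebesgue S powr e \<le> h powr e / c1"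
  proof (cases "0 \<le> e")
    case True
    have "measure lebesgue S powr e \<le> h powr e" using mS1 mS2 c1h True by (intro powr_mono2) auto
    also have "\<dots> \<le> h powr e / c1" using cp h by (simp add: c1_def divide_simps)
    finally show ?thesis .
  next
    case False
    have "measure lebesgue S powr e \<le> (c1 * h) powr e" using mS2 c1h False by (intro powr_mono2') auto
    also have "\<dots> = c1 powr e * h powr e" using cp h by (simp add: c1_def powr_mult)
    also have "c1 powr e \<le> 1 / c1"
    proof -
      have "c1 powr e = (1 / c1) powr (- e)" using cp by (simp add: c1_def powr_minus_divide powr_divide)
      also have "\<dots> \<le> (1 / c1) powr 1" using cp sig by (intro powr_mono) (auto simp: c1_def e_def)
      finally show ?thesis using cp by (simp add: c1_def)
    qed
    then have "c1 powr e * h powr e \<le> 1 / c1 * h powr e" by (intro mult_right_mono) auto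
    finally show ?thesis by simp
  qed
  have key: "h powr e / c1 \<le> cst_C q wmin wmax K * (c * (hi2 - lo2) * (hi1 - lo1))"
  proof -
    have "c * (\<epsilon> * h / ((real q + 1) * K'^q)) * (c1 * h) \<le> c * (hi2 - lo2) * (hi1 - lo1)"
      using Sm(3) A1 A2 c0 c1h cp h kq
      by (intro mult_mono mult_left_mono) (auto simp: \<epsilon>_def)
    moreover have "c * (\<epsilon> * h / ((real q + 1) * K'^q)) * (c1 * h) = cst_kappa q wmin wmax K * h powr e"
    proof -
      have "h powr (-1 - 2 * \<sigma>) * h * h = h powr e"
        using h by (simp add: e_def powr_add[symmetric] powr_diff)
      then show ?thesis unfolding c_def cst_kappa_def
        by (simp add: c1_def d1_def \<epsilon>_def K'_def field_simps)
    qed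
    ultimately have "cst_kappa q wmin wmax K * h powr e \<le> c * (hi2 - lo2) * (hi1 - lo1)" by simp
    then have "cst_C q wmin wmax K * (cst_kappa q wmin wmax K * h powr e) \<le> cst_C q wmin wmax K * (c * (hi2 - lo2) * (hi1 - lo1))"
      using Cpos by (intro mult_left_mono) auto
    moreover have "cst_C q wmin wmax K * (cst_kappa q wmin wmax K * h powr e) = h powr e / c1"
    proof -
      have "cst_C q wmin wmax K * cst_kappa q wmin wmax K = 1 / c1"
        using kpos unfolding cst_C_def c1_def by simp
      then show ?thesis by (metis mult.assoc times_divide_eq_left mult_1)
    qed
    ultimately show ?thesis by simp
  qed
  have "ennreal (measure lebesgue S powr e) \<le> ennreal (cst_C q wmin wmax K * (c * (hi2 - lo2) * (hi1 - lo1)))"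
    using LHS key by (intro ennreal_leI) linarith
  also have "\<dots> = ennreal (cst_C q wmin wmax K) * ennreal (c * (hi2 - lo2) * (hi1 - lo1))"
    using Cpos c0 A2 A1 c1h by (intro ennreal_mult) auto
  also have "\<dots> \<le> ennreal (cst_C q wmin wmax K) * slobodeckij_sq \<sigma> S R"
    using slob' by (intro mult_left_mono) auto
  finally show ?thesis by (simp add: S_def R_def e_def)
qed


theorem lemma2p3:
  fixes q :: nat and wmin wmax K :: real
  assumes "q > 0" and "wmin > 0" and "wmax > 0" and "K > 0"
  shows "\<exists>C>0. \<forall>(\<sigma>::real) (t::int \<Rightarrow> real) (z::int \<Rightarrow> real) (w::int \<Rightarrow> real).
     0 < \<sigma> \<longrightarrow> \<sigma> < 1 \<longrightarrow>
     mono t \<longrightarrow> filterlim t at_top at_top \<longrightarrow> filterlim t at_bot at_bot \<longrightarrow>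
     strict_mono z \<longrightarrow> range z = range t \<longrightarrow>
     (\<forall>i. wmin \<le> w i \<and> w i \<le> wmax) \<longrightarrow>
     (\<forall>j. max ((z j - z (j - 1)) / (z (j - 1) - z (j - 2)))
                ((z j - z (j - 1)) / (z (j + 1) - z j)) \<le> K) \<longrightarrow>
     (\<forall>i. measure lebesgue (supp (nurbs t w i q)) > 0 \<longrightarrow>
        ennreal (measure lebesgue (supp (nurbs t w i q)) powr (1 - 2 * \<sigma>))
          \<le> ennreal C * slobodeckij_sq \<sigma> (supp (nurbs t w i q)) (nurbs t w i q))"
  apply (rule exI[of _ "cst_C q wmin wmax K"])
  apply (intro conjI allI impI)
   apply (rule cst_pos(6)[OF assms(1-3)])
  apply (rule main_fixed[OF assms(1-4)])
            apply assumption+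
  done

end
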